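(* Let $G$ be a finitely generated group. Suppose there exist constants $\alpha,\beta>0$ such that every finite symmetric generating set $U$ of $G$ satisfies $|U^n|\geqslant(\alpha|U|)^{\beta n}$ for every $n\in\mathbb{N}$. Then either $G$ is finite with $|G|\leqslant1/\alpha$, or $G$ has uniform exponential growth.
   Context: For a finite generating set $S$, $B_S(n)$ is the ball of radius $n$ about the identity in the word metric of $S$, $\omega(G,S)=\lim_{n\to\infty}|B_S(n)|^{1/n}$, and $\omega(G)=\inf_S\omega(G,S)$ over finite generating sets; $G$ has uniform exponential growth if $\omega(G)>1$. $U^n=\{u_1\cdots u_n:u_i\in U\}$. *)

theory Defs
  imports "HOL-Analysis.Analysis" "HOL-Algebra.Algebra"
begin

fun set_power :: "('a, 'b) monoid_scheme \<Rightarrow> 'a set \<Rightarrow> nat \<Rightarrow> 'a set" where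
  "set_power G U 0 = {\<one>\<^bsub>G\<^esub>}"
| "set_power G U (Suc n) = set_power G U n <#>\<^bsub>G\<^esub> U"

definition fin_gen_set :: "('a, 'b) monoid_scheme \<Rightarrow> 'a set \<Rightarrow> bool" where
  "fin_gen_set G S \<longleftrightarrow> finite S \<and> S \<subseteq> carrier G \<and> generate G S = carrier G"

definition finitely_generated :: "('a, 'b) monoid_scheme \<Rightarrow> bool" where
  "finitely_generated G \<longleftrightarrow> (\<exists>S. fin_gen_set G S)"

text \<open>Ball of radius n in the word metric of S: words of length at most n in S and S^-1.\<close>
definition word_ball :: "('a, 'b) monoid_scheme \<Rightarrow> 'a set \<Rightarrow> nat \<Rightarrow> 'a set" where
  "word_ball G S n = set_power G (S \<union> (\<lambda>s. inv\<^bsub>G\<^esub> s) ` S \<union> {\<one>\<^bsub>G\<^esub>}) n"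

definition growth_rate :: "('a, 'b) monoid_scheme \<Rightarrow> 'a set \<Rightarrow> real" where
  "growth_rate G S = lim (\<lambda>n. real (card (word_ball G S n)) powr (1 / real n))"

definition min_growth_rate :: "('a, 'b) monoid_scheme \<Rightarrow> real" where
  "min_growth_rate G = (INF S \<in> {S. fin_gen_set G S}. growth_rate G S)"

definition uniform_exponential_growth :: "('a, 'b) monoid_scheme \<Rightarrow> bool" where
  "uniform_exponential_growth G \<longleftrightarrow> min_growth_rate G > 1"

end

theory Submission
  imports Defs
begin


lemma sub_mult_bound:
  fixes b :: "nat \<Rightarrow> real"
  assumes sub: "\<And>m n. b (m + n) \<le> b m + b n"
  shows "b (q * m + r) \<le> real q * b m + b r"
proof (induction q)
  case 0 then show ?case by simp
next
  case (Suc q)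
  have "b (Suc q * m + r) = b (m + (q * m + r))" by (simp add: algebra_simps)
  also have "\<dots> \<le> b m + b (q * m + r)" by (rule sub)
  also have "\<dots> \<le> real (Suc q) * b m + b r" using Suc by (simp add: algebra_simps)
  finally show ?case .
qed

lemma fekete:
  fixes b :: "nat \<Rightarrow> real"
  assumes sub: "\<And>m n. b (m + n) \<le> b m + b n" and nn: "\<And>n. b n \<ge> 0"
  shows "(\<lambda>n. b n / real n) \<longlonglongrightarrow> (INF n\<in>{1..}. b n / real n)"
proof -
  define L where "L = (INF n\<in>{1..}. b n / real n)"
  have bdd: "bdd_below ((\<lambda>n. b n / real n) ` {1..})"
    by (rule bdd_belowI[of _ 0]) (use nn in auto)
  have low: "L \<le> b n / real n" if "n \<ge> 1" for n
    unfolding L_def by (rule cINF_lower[OF bdd]) (use that in auto)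
  show ?thesis unfolding L_def[symmetric]
  proof (rule LIMSEQ_I)
    fix e :: real assume e: "e > 0"
    have "\<exists>m\<in>{1..}. b m / real m < L + e/2"
      unfolding L_def by (rule cINF_less_iff[OF _ bdd, THEN iffD1]) (use e L_def in auto)
    then obtain m where m1: "m \<ge> 1" and mL: "b m / real m < L + e/2" by auto
    define M where "M = (\<Sum>r<m. b r)"
    have Mr: "b r \<le> M" if "r < m" for r
      unfolding M_def using that nn by (intro member_le_sum) auto
    have M0: "M \<ge> 0" unfolding M_def using nn by (simp add: sum_nonneg)
    obtain N :: nat where N: "real N > 2 * M / e" using reals_Archimedean2 by blast
    show "\<exists>N. \<forall>n\<ge>N. norm (b n / real n - L) < e"
    proof (intro exI[of _ "Suc N"] allI impI)
      fix n assume n: "n \<ge> Suc N"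
      then have npos: "real n > 0" by simp
      define q where "q = n div m"
      define r where "r = n mod m"
      have nqr: "n = q * m + r" unfolding q_def r_def by simp
      have rm: "r < m" unfolding r_def using m1 by simp
      have "b n \<le> real q * b m + b r" using sub_mult_bound[of b q m r, OF sub] nqr by simp
      also have "\<dots> \<le> real q * b m + M" using Mr[OF rm] by simp
      finally have bn: "b n \<le> real q * b m + M" .
      have qm: "real q * real m \<le> real n" using nqr
        by (metis of_nat_le_iff of_nat_mult le_add1)
      have "real q * b m = (real q * real m) * (b m / real m)" using m1 by simp
      also have "\<dots> \<le> real n * (b m / real m)"
        using qm nn[of m] m1 by (intro mult_right_mono) auto
      finally have "b n \<le> real n * (b m / real m) + M" using bn by linarith
      then have "b n / real n \<le> b m / real m + M / real n"
        using npos by (simp add: field_simps)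
      moreover have "M / real n < e / 2"
      proof -
        have "real n > 2 * M / e" using N n by linarith
        then have "2 * M < e * real n" using e by (simp add: field_simps)
        then show ?thesis using npos by (simp add: field_simps)
      qed
      ultimately have "b n / real n < L + e" using mL by linarith
      moreover have "L \<le> b n / real n" using low n by simp
      ultimately show "norm (b n / real n - L) < e" by simp
    qed
  qed
qed



lemma card_set_mult_le:
  assumes "finite H" "finite K"
  shows "finite (H <#>\<^bsub>G\<^esub> K) \<and> card (H <#>\<^bsub>G\<^esub> K) \<le> card H * card K"
proof -
  have eq: "H <#>\<^bsub>G\<^esub> K = (\<lambda>(h,k). h \<otimes>\<^bsub>G\<^esub> k) ` (H \<times> K)"
    unfolding set_mult_def by auto
  show ?thesis unfolding eq using assms
    by (metis card_cartesian_product card_image_le finite_cartesian_product finite_imageI)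
qed

context group begin

lemma sp_carrier: "U \<subseteq> carrier G \<Longrightarrow> set_power G U n \<subseteq> carrier G"
proof (induction n)
  case 0 then show ?case by simp
next
  case (Suc n) then show ?case using set_mult_closed[of "set_power G U n" U] by simp
qed

lemma sp_finite: "finite U \<Longrightarrow> finite (set_power G U n)"
  by (induction n) (auto simp: card_set_mult_le)

lemma sp_one: "U \<subseteq> carrier G \<Longrightarrow> set_power G U 1 = U"
  using lcos_mult_one[of U] by (simp add: l_coset_eq_set_mult)

lemma sp_add: "U \<subseteq> carrier G \<Longrightarrow> set_power G U (m + n) = set_power G U m <#> set_power G U n"
proof (induction n)
  case 0
  then show ?case using coset_mult_one[OF sp_carrier[OF 0]] by (simp add: r_coset_eq_set_mult)
next
  case (Suc n)
  then show ?case by (simp add: set_mult_assoc sp_carrier)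
qed

lemma sp_mult: "U \<subseteq> carrier G \<Longrightarrow> set_power G U (k * n) = set_power G (set_power G U k) n"
proof (induction n)
  case 0 then show ?case by simp
next
  case (Suc n)
  have "set_power G U (k * Suc n) = set_power G U (k * n + k)" by (simp add: algebra_simps)
  also have "\<dots> = set_power G U (k * n) <#> set_power G U k" by (rule sp_add[OF Suc.prems])
  finally show ?case using Suc by simp
qed

lemma sp_card_mult: "finite U \<Longrightarrow> U \<subseteq> carrier G \<Longrightarrow>
   card (set_power G U (m + n)) \<le> card (set_power G U m) * card (set_power G U n)"
proof -
  assume a: "finite U" "U \<subseteq> carrier G"
  show ?thesis unfolding sp_add[OF a(2)] using card_set_mult_le[OF sp_finite[OF a(1)] sp_finite[OF a(1)]] by blast
qed

lemma sp_one_in: "\<one> \<in> U \<Longrightarrow> U \<subseteq> carrier G \<Longrightarrow> \<one> \<in> set_power G U n"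
proof (induction n)
  case 0 then show ?case by simp
next
  case (Suc n)
  then have "\<one> \<otimes> \<one> \<in> set_power G U n <#> U" unfolding set_mult_def by blast
  then show ?case by simp
qed

lemma sp_mono_Suc: "\<one> \<in> U \<Longrightarrow> U \<subseteq> carrier G \<Longrightarrow> set_power G U n \<subseteq> set_power G U (Suc n)"
proof
  fix x assume "\<one> \<in> U" "U \<subseteq> carrier G" "x \<in> set_power G U n"
  moreover have "x \<in> carrier G" using sp_carrier calculation by blast
  ultimately have "x \<otimes> \<one> \<in> set_power G U n <#> U" unfolding set_mult_def by blast
  then show "x \<in> set_power G U (Suc n)" using \<open>x \<in> carrier G\<close> by simp
qed

lemma sp_mono: assumes "\<one> \<in> U" "U \<subseteq> carrier G" "m \<le> n" shows "set_power G U m \<subseteq> set_power G U n"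
  using assms(3)
proof (induction n rule: dec_induct)
  case base then show ?case by simp
next
  case (step n) then show ?case using sp_mono_Suc[OF assms(1,2), of n] by blast
qed

lemma sp_sym: assumes "U \<subseteq> carrier G" "\<forall>u\<in>U. inv u \<in> U"
  shows "\<forall>x\<in>set_power G U n. inv x \<in> set_power G U n"
proof (induction n)
  case 0 then show ?case by simp
next
  case (Suc n)
  show ?case
  proof
    fix x assume "x \<in> set_power G U (Suc n)"
    then obtain h u where hu: "h \<in> set_power G U n" "u \<in> U" "x = h \<otimes> u"
      unfolding set_power.simps set_mult_def by blast
    have hc: "h \<in> carrier G" using hu sp_carrier[OF assms(1)] by blast
    have uc: "u \<in> carrier G" using hu assms by blast
    have "inv x = inv u \<otimes> inv h" using hu hc uc by (simp add: inv_mult_group)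
    also have "\<dots> \<in> U <#> set_power G U n"
      unfolding set_mult_def using hu Suc assms by blast
    also have "U <#> set_power G U n = set_power G U (1 + n)"
      using sp_add[OF assms(1), of 1 n] sp_one[OF assms(1)] by simp
    finally show "inv x \<in> set_power G U (Suc n)" by simp
  qed
qed

lemma sp_generate: assumes "U \<subseteq> carrier G" "\<forall>u\<in>U. inv u \<in> U" "\<one> \<in> U"
  shows "generate G U \<subseteq> (\<Union>n. set_power G U n)"
proof
  fix x assume "x \<in> generate G U"
  then show "x \<in> (\<Union>n. set_power G U n)"
  proof (induction rule: generate.induct)
    case one then show ?case using sp_one_in[OF assms(3,1), of 0] by blast
  next
    case (incl h) then show ?case using sp_one[OF assms(1)] by blast
  next
    case (inv h) then show ?case using sp_one[OF assms(1)] assms(2) by blast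
  next
    case (eng h1 h2)
    then obtain m n where "h1 \<in> set_power G U m" "h2 \<in> set_power G U n" by blast
    then have "h1 \<otimes> h2 \<in> set_power G U (m + n)"
      unfolding sp_add[OF assms(1)] set_mult_def by blast
    then show ?case by blast
  qed
qed

lemma sp_card_grow: assumes "U \<subseteq> carrier G" "\<forall>u\<in>U. inv u \<in> U" "\<one> \<in> U" "finite U"
   "generate G U = carrier G" "infinite (carrier G)"
  shows "card (set_power G U j) \<ge> j + 1"
proof (induction j)
  case 0 then show ?case by simp
next
  case (Suc j)
  have sub: "set_power G U j \<subseteq> set_power G U (Suc j)" by (rule sp_mono_Suc[OF assms(3,1)])
  have neq: "set_power G U j \<noteq> set_power G U (Suc j)"
  proof
    assume eq: "set_power G U j = set_power G U (Suc j)"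
    have st: "set_power G U (j + m) = set_power G U j" for m
    proof (induction m)
      case 0 then show ?case by simp
    next
      case (Suc m)
      have "set_power G U (j + Suc m) = set_power G U (j + m) <#> U" by simp
      also have "\<dots> = set_power G U j <#> U" using Suc by simp
      also have "\<dots> = set_power G U j" by (metis eq set_power.simps(2))
      finally show ?case .
    qed
    have "carrier G \<subseteq> set_power G U j"
    proof
      fix x assume "x \<in> carrier G"
      then have "x \<in> (\<Union>n. set_power G U n)" using sp_generate[OF assms(1,2,3)] assms(5) by (simp add: subset_iff)
      then obtain m where "x \<in> set_power G U m" by (rule UN_E)
      moreover have "set_power G U m \<subseteq> set_power G U (j + m)" using sp_mono[OF assms(3,1)] by simp
      ultimately show "x \<in> set_power G U j" using st by blast
    qed
    then show False using sp_finite[OF assms(4), of j] assms(6) finite_subset by metis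
  qed
  have "card (set_power G U j) < card (set_power G U (Suc j))"
    using sub neq sp_finite[OF assms(4), of "Suc j"] by (intro psubset_card_mono) (simp_all only: psubset_eq, simp)
  then show ?case using Suc.IH by linarith
qed

end

theorem lemma2p6:
  fixes G :: "('a, 'b) monoid_scheme" and \<alpha> \<beta> :: real
  assumes "group G"
    and "finitely_generated G"
    and "\<alpha> > 0" and "\<beta> > 0"
    and "\<And>U n. fin_gen_set G U \<Longrightarrow> (\<forall>u\<in>U. inv\<^bsub>G\<^esub> u \<in> U) \<Longrightarrow>
           real (card (set_power G U n)) \<ge> (\<alpha> * real (card U)) powr (\<beta> * real n)"
  shows "(finite (carrier G) \<and> real (card (carrier G)) \<le> 1 / \<alpha>) \<or> uniform_exponential_growth G"
proof -
  interpret group G by fact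
  note hyp = assms(5)
  show ?thesis
  proof (cases "finite (carrier G)")
    case True
    let ?C = "carrier G"
    have fg: "fin_gen_set G ?C"
      unfolding fin_gen_set_def using True generate_incl[of ?C] generate.incl[of _ ?C G] by blast
    have sym: "\<forall>u\<in>?C. inv\<^bsub>G\<^esub> u \<in> ?C" by simp
    have spC: "set_power G ?C (Suc n) = ?C" for n
    proof (induction n)
      case 0 then show ?case using sp_one[of ?C] by simp
    next
      case (Suc n) then show ?case using set_mult_carrier_idem[OF subgroup_self] by simp
    qed
    have bound: "real (card ?C) \<ge> (\<alpha> * card ?C) powr (\<beta> * real (Suc n))" for n
      using hyp[OF fg sym, of "Suc n"] spC[of n] by simp
    have "\<alpha> * card ?C \<le> 1"
    proof (rule ccontr)
      assume "\<not> \<alpha> * card ?C \<le> 1"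
      then have x1: "\<alpha> * card ?C > 1" by simp
      define y where "y = (\<alpha> * card ?C) powr \<beta>"
      have y1: "y > 1" unfolding y_def using x1 assms(4) by simp
      obtain n where n: "real (card ?C) < y ^ n" using real_arch_pow[OF y1] by blast
      have "y ^ n \<le> y ^ Suc n" using y1 by simp
      also have "y ^ Suc n = y powr (real (Suc n))" using y1 by (subst powr_realpow) auto
      also have "\<dots> = (\<alpha> * card ?C) powr (\<beta> * real (Suc n))"
        unfolding y_def by (rule powr_powr)
      finally show False using n bound[of n] by linarith
    qed
    then have "real (card ?C) \<le> 1 / \<alpha>" using assms(3) by (simp add: field_simps)
    then show ?thesis using True by simp
  next
    case False
    obtain S0 where S0: "fin_gen_set G S0" using assms(2) unfolding finitely_generated_def by blast
    define k :: nat where "k = nat \<lceil>2 / \<alpha>\<rceil> + 1"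
    have k1: "k \<ge> 1" unfolding k_def by simp
    have "real k \<ge> 2 / \<alpha>" unfolding k_def by linarith
    then have ak: "\<alpha> * real (k + 1) \<ge> 2" using assms(3) by (simp add: field_simps)
    define c where "c = 2 powr (\<beta> / real k)"
    have c1: "c > 1" unfolding c_def using k1 assms(4) by simp
    have key: "growth_rate G S \<ge> c" if S: "fin_gen_set G S" for S
    proof -
      define U where "U = S \<union> (\<lambda>s. inv\<^bsub>G\<^esub> s) ` S \<union> {\<one>\<^bsub>G\<^esub>}"
      have Sc: "S \<subseteq> carrier G" "finite S" "generate G S = carrier G"
        using S unfolding fin_gen_set_def by auto
      have Uc: "U \<subseteq> carrier G" unfolding U_def using Sc by auto
      have Uf: "finite U" unfolding U_def using Sc by auto
      have U1: "\<one>\<^bsub>G\<^esub> \<in> U" unfolding U_def by simp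
      have Us: "\<forall>u\<in>U. inv\<^bsub>G\<^esub> u \<in> U" unfolding U_def using Sc by auto
      have Ug: "generate G U = carrier G"
        using mono_generate[of S U] generate_incl[OF Uc] Sc(3) unfolding U_def by auto
      have wb: "word_ball G S n = set_power G U n" for n unfolding word_ball_def U_def by simp
      define a where "a n = real (card (set_power G U n))" for n
      have a1: "a n \<ge> 1" for n
      proof -
        have "set_power G U n \<noteq> {}" using sp_one_in[OF U1 Uc] by blast
        then show ?thesis unfolding a_def using sp_finite[OF Uf, of n]
          by (simp add: Suc_le_eq card_gt_0_iff)
      qed
      define b where "b n = ln (a n)" for n
      have bsub: "b (m + n) \<le> b m + b n" for m n
      proof -
        have "a (m + n) \<le> a m * a n" unfolding a_def using sp_card_mult[OF Uf Uc, of m n]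
          by (metis of_nat_le_iff of_nat_mult)
        then have "ln (a (m + n)) \<le> ln (a m * a n)" using a1[of "m+n"] by simp
        then show ?thesis unfolding b_def using a1[of m] a1[of n] by (simp add: ln_mult)
      qed
      have bnn: "b n \<ge> 0" for n unfolding b_def using a1[of n] by simp
      define L where "L = (INF n\<in>{1..}. b n / real n)"
      have fk: "(\<lambda>n. b n / real n) \<longlonglongrightarrow> L" unfolding L_def by (rule fekete[OF bsub bnn])
      define g where "g n = a n powr (1 / real n)" for n
      have geq: "g n = exp (b n / real n)" for n
        unfolding g_def b_def powr_def using a1[of n] by simp
      have glim: "g \<longlonglongrightarrow> exp L" unfolding geq[abs_def] by (intro tendsto_exp fk)
      have gr: "growth_rate G S = exp L"
        unfolding growth_rate_def wb a_def[symmetric] g_def[symmetric] using glim by (rule limI)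
      have sm: "strict_mono (\<lambda>n. k * n)" using k1 by (intro strict_monoI) simp
      have glim2: "(\<lambda>n. g (k * n)) \<longlonglongrightarrow> exp L"
        using LIMSEQ_subseq_LIMSEQ[OF glim sm] by (simp add: comp_def)
      define V where "V = set_power G U k"
      have Vc: "V \<subseteq> carrier G" unfolding V_def by (rule sp_carrier[OF Uc])
      have Vf: "finite V" unfolding V_def by (rule sp_finite[OF Uf])
      have UV: "U \<subseteq> V" unfolding V_def using sp_mono[OF U1 Uc k1] sp_one[OF Uc] by simp
      have Vg: "generate G V = carrier G" using mono_generate[OF UV] generate_incl[OF Vc] Ug by auto
      have Vfg: "fin_gen_set G V" unfolding fin_gen_set_def using Vc Vf Vg by simp
      have Vs: "\<forall>u\<in>V. inv\<^bsub>G\<^esub> u \<in> V" unfolding V_def by (rule sp_sym[OF Uc Us])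
      have cV: "real (card V) \<ge> real (k + 1)" unfolding V_def
        using sp_card_grow[OF Uc Us U1 Uf Ug False, of k] by linarith
      have lb: "c \<le> g (k * n)" if n1: "n \<ge> 1" for n
      proof -
        have knpos: "real k * real n > 0" using k1 n1 by simp
        have "a (k * n) \<ge> (\<alpha> * real (card V)) powr (\<beta> * real n)"
          unfolding a_def sp_mult[OF Uc] V_def[symmetric] by (rule hyp[OF Vfg Vs])
        moreover have "(\<alpha> * real (card V)) \<ge> 2"
          using ak cV assms(3) by (smt (verit) mult_left_mono)
        then have "(\<alpha> * real (card V)) powr (\<beta> * real n) \<ge> 2 powr (\<beta> * real n)"
          using assms(4) by (intro powr_mono2) auto
        ultimately have A: "a (k * n) \<ge> 2 powr (\<beta> * real n)" by linarith
        have "c = (2 powr (\<beta> * real n)) powr (1 / real (k * n))"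
          unfolding c_def using knpos n1 by (simp add: powr_powr)
        also have "\<dots> \<le> a (k * n) powr (1 / real (k * n))"
          using A knpos by (intro powr_mono2) auto
        finally show ?thesis unfolding g_def .
      qed
      have "c \<le> exp L" by (rule LIMSEQ_le_const[OF glim2]) (use lb in blast)
      then show ?thesis using gr by simp
    qed
    have "min_growth_rate G \<ge> c" unfolding min_growth_rate_def
      using S0 key by (intro cINF_greatest) auto
    then show ?thesis unfolding uniform_exponential_growth_def using c1 by simp
  qed
qed

end
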